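(* Let $H$ be a real Hilbert space, $f:H\to\mathbb{R}\cup\{+\infty\}$ a proper lower semicontinuous function and $\bar x\in\operatorname{dom}f$ with $0\in\partial_pf(\bar x)$. Suppose that $\operatorname{qri}\big(N_M(\operatorname{gph}\partial_pf,(\bar x,0))\big)\ne\emptyset$ and $$\operatorname{qri}\big(\operatorname{dom}\partial^2_Mf(\bar x,0)\big)\subset-\operatorname{sqri}\big(\operatorname{dom}D^2_Mf(\bar x,0)\big).$$ Then if $f$ satisfies the second-order optimality condition of the second kind at $\bar x$, it satisfies the second-order optimality condition of the third kind at $\bar x$.
   Context: $S_H$ is the unit sphere of $H$; weak convergence is denoted $\stackrel{w}{\to}$. Proximal subdifferential: $\zeta\in\partial_p f(x)$ iff there exist $\sigma,\delta>0$ with $f(y)\ge f(x)+\langle\zeta,y-x\rangle-\frac{\sigma}{2}\|y-x\|^2$ whenever $\|y-x\|<\delta$. Mixed contingent cone: $(h,z)\in T_M(\operatorname{gph}\partial_pf,(\bar x,p))$ iff there exist $t_n\to0^+$, $h_n\to h$ in norm, $z_n\stackrel{w}{\to}z$ with $p+t_nz_n\in\partial_pf(\bar x+t_nh_n)$ for all $n$. $D^2_Mf(\bar x,p)(h):=\{z:(h,z)\in T_M(\operatorname{gph}\partial_pf,(\bar x,p))\}$. $N_M(\operatorname{gph}\partial_pf,(\bar x,p)):=\{(a,b):\langle a,h\rangle+\langle b,z\rangle\le0\ \forall(h,z)\in T_M(\operatorname{gph}\partial_pf,(\bar x,p))\}$; $\partial^2_Mf(\bar x,p)(h):=\{z:(z,-h)\in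 N_M(\operatorname{gph}\partial_pf,(\bar x,p))\}$. For a set-valued map $G$, $\operatorname{dom}G=\{h:G(h)\ne\emptyset\}$. $\operatorname{qri}A:=\{x\in A:\overline{\operatorname{cone}}(A-x)\text{ is a linear subspace}\}$, $\operatorname{sqri}A:=\{x\in A:\operatorname{cone}(A-x)\text{ is a closed linear subspace}\}$. Second kind condition at $\bar x$: $\exists\beta>0$ such that for every $h\in\operatorname{dom}D^2_Mf(\bar x,0)\cap S_H$ there is $z\in D^2_Mf(\bar x,0)(h)$ with $\langle z,h\rangle\ge\beta$. Third kind condition: $\exists\beta>0$ such that $\langle z,h\rangle\ge\beta$ for all $h\in S_H\cap\operatorname{dom}\partial^2_Mf(\bar x,0)$ and all $z\in\partial^2_Mf(\bar x,0)(h)$. *)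

theory Defs
  imports "HOL-Analysis.Analysis"
begin

text \<open>Extended-real valued functions f : H -> R u {+inf}; H is a real Hilbert space,
  i.e. a type of class real_inner and complete_space.\<close>

definition proper_fun :: "('a \<Rightarrow> ereal) \<Rightarrow> bool" where
  "proper_fun f \<longleftrightarrow> (\<forall>x. f x \<noteq> -\<infinity>) \<and> (\<exists>x. f x \<noteq> \<infinity>)"

definition lsc_fun :: "('a::topological_space \<Rightarrow> ereal) \<Rightarrow> bool" where
  "lsc_fun f \<longleftrightarrow> (\<forall>x. f x \<le> Liminf (at x) f)"

definition edom :: "('a \<Rightarrow> ereal) \<Rightarrow> 'a set" where
  "edom f = {x. f x \<noteq> \<infinity>}"

definition prox_subdiff :: "('a::real_inner \<Rightarrow> ereal) \<Rightarrow> 'a \<Rightarrow> 'a set" where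
  "prox_subdiff f x = {\<zeta>. f x \<noteq> \<infinity> \<and> (\<exists>\<sigma>>0. \<exists>\<delta>>0. \<forall>y. norm (y - x) < \<delta> \<longrightarrow>
      f y \<ge> f x + ereal (inner \<zeta> (y - x)) - ereal (\<sigma> / 2 * (norm (y - x))\<^sup>2))}"

definition weak_conv :: "(nat \<Rightarrow> 'a::real_inner) \<Rightarrow> 'a \<Rightarrow> bool" where
  "weak_conv z w \<longleftrightarrow> (\<forall>y. (\<lambda>n. inner (z n) y) \<longlonglongrightarrow> inner w y)"

definition TM :: "('a::real_inner \<Rightarrow> ereal) \<Rightarrow> 'a \<Rightarrow> 'a \<Rightarrow> ('a \<times> 'a) set" where
  "TM f xb p = {(h, z). \<exists>t hs zs. (\<forall>n. t n > 0) \<and> t \<longlonglongrightarrow> 0 \<and> hs \<longlonglongrightarrow> h \<and> weak_conv zs z \<and>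
      (\<forall>n. p + t n *\<^sub>R zs n \<in> prox_subdiff f (xb + t n *\<^sub>R hs n))}"

definition D2M :: "('a::real_inner \<Rightarrow> ereal) \<Rightarrow> 'a \<Rightarrow> 'a \<Rightarrow> 'a \<Rightarrow> 'a set" where
  "D2M f xb p h = {z. (h, z) \<in> TM f xb p}"

definition NM :: "('a::real_inner \<Rightarrow> ereal) \<Rightarrow> 'a \<Rightarrow> 'a \<Rightarrow> ('a \<times> 'a) set" where
  "NM f xb p = {(a, b). \<forall>(h, z) \<in> TM f xb p. inner a h + inner b z \<le> 0}"

definition d2M :: "('a::real_inner \<Rightarrow> ereal) \<Rightarrow> 'a \<Rightarrow> 'a \<Rightarrow> 'a \<Rightarrow> 'a set" where
  "d2M f xb p h = {z. (z, - h) \<in> NM f xb p}"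

definition sv_dom :: "('a \<Rightarrow> 'b set) \<Rightarrow> 'a set" where
  "sv_dom G = {h. G h \<noteq> {}}"

definition cone_of :: "'a::real_vector set \<Rightarrow> 'a set" where
  "cone_of S = {t *\<^sub>R v | t v. t \<ge> 0 \<and> v \<in> S}"

definition qri :: "'a::real_normed_vector set \<Rightarrow> 'a set" where
  "qri A = {x \<in> A. subspace (closure (cone_of ((\<lambda>a. a - x) ` A)))}"

definition sqri :: "'a::real_normed_vector set \<Rightarrow> 'a set" where
  "sqri A = {x \<in> A. closed (cone_of ((\<lambda>a. a - x) ` A)) \<and> subspace (cone_of ((\<lambda>a. a - x) ` A))}"

definition second_kind :: "('a::real_inner \<Rightarrow> ereal) \<Rightarrow> 'a \<Rightarrow> bool" where
  "second_kind f xb \<longleftrightarrow> (\<exists>\<beta>>0. \<forall>h \<in> sv_dom (D2M f xb 0) \<inter> sphere 0 1.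
      \<exists>z \<in> D2M f xb 0 h. inner z h \<ge> \<beta>)"

definition third_kind :: "('a::real_inner \<Rightarrow> ereal) \<Rightarrow> 'a \<Rightarrow> bool" where
  "third_kind f xb \<longleftrightarrow> (\<exists>\<beta>>0. \<forall>h \<in> sphere 0 1 \<inter> sv_dom (d2M f xb 0).
      \<forall>z \<in> d2M f xb 0 h. inner z h \<ge> \<beta>)"

end

theory Submission
  imports Defs
begin

lemma closure_subspace_lemma:
  fixes S :: "'a::real_normed_vector set"
  assumes S: "subspace S"
  shows "subspace (closure S)"
  unfolding subspace_def
proof (intro conjI ballI allI)
  show "0 \<in> closure S" using subspace_0[OF S] closure_subset by auto
next
  fix x y assume x: "x \<in> closure S" and y: "y \<in> closure S"
  obtain xs where xs: "\<forall>n. xs n \<in> S" "xs \<longlonglongrightarrow> x" using x unfolding closure_sequential by auto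
  obtain ys where ys: "\<forall>n. ys n \<in> S" "ys \<longlonglongrightarrow> y" using y unfolding closure_sequential by auto
  have "\<forall>n. xs n + ys n \<in> S" using xs(1) ys(1) subspace_add[OF S] by simp
  moreover have "(\<lambda>n. xs n + ys n) \<longlonglongrightarrow> x + y" using xs(2) ys(2) by (rule tendsto_add)
  ultimately show "x + y \<in> closure S" unfolding closure_sequential by auto
next
  fix c :: real and x assume x: "x \<in> closure S"
  obtain xs where xs: "\<forall>n. xs n \<in> S" "xs \<longlonglongrightarrow> x" using x unfolding closure_sequential by auto
  have "\<forall>n. c *\<^sub>R xs n \<in> S" using xs(1) subspace_scale[OF S] by simp
  moreover have "(\<lambda>n. c *\<^sub>R xs n) \<longlonglongrightarrow> c *\<^sub>R x" using xs(2) by (intro tendsto_scaleR tendsto_const)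
  ultimately show "c *\<^sub>R x \<in> closure S" unfolding closure_sequential by auto
qed

lemma qri_absorb:
  fixes C :: "'a::real_normed_vector set"
  assumes add: "\<And>x y. x \<in> C \<Longrightarrow> y \<in> C \<Longrightarrow> x + y \<in> C"
    and scl: "\<And>c x. c \<ge> 0 \<Longrightarrow> x \<in> C \<Longrightarrow> c *\<^sub>R x \<in> C"
    and x0: "x0 \<in> qri C" and x: "x \<in> C" and s: "s > 0"
  shows "x + s *\<^sub>R x0 \<in> qri C"
proof -
  define E where "E = closure (cone_of ((\<lambda>a. a - x0) ` C))"
  have E: "subspace E" and x0C: "x0 \<in> C" using x0 unfolding qri_def E_def by auto
  have zC: "0 \<in> C" using scl[OF order_refl x0C] by simp
  have inE: "c \<in> E" if "c \<in> C" for c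
  proof -
    have "c + x0 \<in> C" using add that x0C by blast
    hence "1 *\<^sub>R ((c + x0) - x0) \<in> cone_of ((\<lambda>a. a - x0) ` C)"
      unfolding cone_of_def by (intro CollectI exI[of _ 1] exI[of _ "(c + x0) - x0"]) (auto intro!: rev_image_eqI[of "c+x0"])
    thus ?thesis unfolding E_def using closure_subset by auto
  qed
  have mx0: "x0 \<in> E"
  proof -
    have "1 *\<^sub>R (0 - x0) \<in> cone_of ((\<lambda>a. a - x0) ` C)"
      unfolding cone_of_def using zC by (intro CollectI exI[of _ 1] exI[of _ "0 - x0"]) auto
    hence "- x0 \<in> E" unfolding E_def using closure_subset by auto
    from subspace_neg[OF E this] show ?thesis by simp
  qed
  define S where "S = cone_of ((\<lambda>a. a - (x + s *\<^sub>R x0)) ` C)"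
  have "S \<subseteq> E"
  proof
    fix v assume "v \<in> S"
    then obtain t c where v: "v = t *\<^sub>R (c - (x + s *\<^sub>R x0))" "c \<in> C"
      unfolding S_def cone_of_def by auto
    have "c - (x + s *\<^sub>R x0) \<in> E"
      by (rule subspace_diff[OF E inE[OF v(2)] subspace_add[OF E inE[OF x] subspace_scale[OF E mx0]]])
    thus "v \<in> E" unfolding v(1) by (rule subspace_scale[OF E])
  qed
  hence c1: "closure S \<subseteq> E" unfolding E_def by (simp add: closure_minimal)
  have "cone_of ((\<lambda>a. a - x0) ` C) \<subseteq> S"
  proof
    fix v assume "v \<in> cone_of ((\<lambda>a. a - x0) ` C)"
    then obtain t c where v: "v = t *\<^sub>R (c - x0)" "c \<in> C" "t \<ge> 0"
      unfolding cone_of_def by auto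
    have sc: "s *\<^sub>R c + x \<in> C" by (rule add[OF scl[OF less_imp_le[OF s] v(2)] x])
    have "v = (t / s) *\<^sub>R ((s *\<^sub>R c + x) - (x + s *\<^sub>R x0))"
    proof -
      have "(s *\<^sub>R c + x) - (x + s *\<^sub>R x0) = s *\<^sub>R (c - x0)" by (simp add: scaleR_diff_right)
      thus ?thesis using s v(1) by simp
    qed
    thus "v \<in> S" unfolding S_def cone_of_def using sc v(3) s
      by (intro CollectI exI[of _ "t / s"] exI[of _ "(s *\<^sub>R c + x) - (x + s *\<^sub>R x0)"]) (auto intro!: rev_image_eqI[of "s *\<^sub>R c + x"])
  qed
  hence "E \<subseteq> closure S" unfolding E_def by (rule closure_mono)
  hence "closure S = E" using c1 by blast
  moreover have "x + s *\<^sub>R x0 \<in> C" by (rule add[OF x scl[OF less_imp_le[OF s] x0C]])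
  ultimately show ?thesis unfolding qri_def mem_Collect_eq S_def[symmetric] using E by simp
qed

lemma qri_image:
  fixes C :: "'a::real_normed_vector set" and L :: "'a \<Rightarrow> 'b::real_normed_vector"
  assumes L: "bounded_linear L" and x: "x \<in> qri C"
  shows "L x \<in> qri (L ` C)"
proof -
  interpret bounded_linear L by fact
  define K where "K = cone_of ((\<lambda>a. a - x) ` C)"
  have V: "subspace (closure K)" and xC: "x \<in> C" using x unfolding qri_def K_def by auto
  have eq: "cone_of ((\<lambda>a. a - L x) ` L ` C) = L ` K"
  proof
    show "cone_of ((\<lambda>a. a - L x) ` L ` C) \<subseteq> L ` K"
    proof
      fix v assume "v \<in> cone_of ((\<lambda>a. a - L x) ` L ` C)"
      then obtain t c where v: "v = t *\<^sub>R (L c - L x)" "t \<ge> 0" "c \<in> C"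
        unfolding cone_of_def by auto
      have "t *\<^sub>R (c - x) \<in> K" unfolding K_def cone_of_def using v by auto
      moreover have "v = L (t *\<^sub>R (c - x))" using v by (simp add: diff scaleR)
      ultimately show "v \<in> L ` K" by blast
    qed
  next
    show "L ` K \<subseteq> cone_of ((\<lambda>a. a - L x) ` L ` C)"
    proof
      fix v assume "v \<in> L ` K"
      then obtain t c where v: "v = L (t *\<^sub>R (c - x))" "t \<ge> 0" "c \<in> C"
        unfolding K_def cone_of_def by auto
      have "v = t *\<^sub>R (L c - L x)" using v by (simp add: diff scaleR)
      thus "v \<in> cone_of ((\<lambda>a. a - L x) ` L ` C)" unfolding cone_of_def using v by auto
    qed
  qed
  have lin: "linear L" by (simp add: linear_axioms)
  have sub1: "L ` closure K \<subseteq> closure (L ` K)"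
    by (rule image_closure_subset) (use closure_subset linear_continuous_on L in \<open>auto intro: closure_subset[THEN subsetD]\<close>)
  have sub2: "closure (L ` K) \<subseteq> closure (L ` closure K)"
    by (intro closure_mono image_mono closure_subset)
  have sub3: "closure (L ` closure K) \<subseteq> closure (L ` K)"
    using sub1 by (metis closed_closure closure_minimal)
  have "closure (L ` K) = closure (L ` closure K)" using sub2 sub3 by blast
  moreover have "subspace (L ` closure K)" using V lin linear_subspace_image by blast
  ultimately have "subspace (closure (L ` K))" using closure_subspace_lemma by metis
  thus ?thesis unfolding qri_def using eq xC by auto
qed


lemma TM_scale:
  assumes "(h, z) \<in> TM f xb p" and c: "c > 0"
  shows "(c *\<^sub>R h, c *\<^sub>R z) \<in> TM f xb p"
proof -
  obtain t hs zs where H: "\<forall>n. t n > 0" "t \<longlonglongrightarrow> 0" "hs \<longlonglongrightarrow> h" "weak_conv zs z"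
      "\<forall>n. p + t n *\<^sub>R zs n \<in> prox_subdiff f (xb + t n *\<^sub>R hs n)"
    using assms(1) unfolding TM_def by auto
  have "\<forall>n. t n / c > 0" using H(1) c by simp
  moreover have "(\<lambda>n. t n / c) \<longlonglongrightarrow> 0" using H(2) by (rule tendsto_divide_zero)
  moreover have "(\<lambda>n. c *\<^sub>R hs n) \<longlonglongrightarrow> c *\<^sub>R h" using H(3) by (intro tendsto_intros)
  moreover have "weak_conv (\<lambda>n. c *\<^sub>R zs n) (c *\<^sub>R z)"
    using H(4) unfolding weak_conv_def by (auto intro: tendsto_mult_left)
  moreover have "\<forall>n. p + (t n / c) *\<^sub>R (c *\<^sub>R zs n) \<in> prox_subdiff f (xb + (t n / c) *\<^sub>R (c *\<^sub>R hs n))"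
    using H(5) c by simp
  ultimately show ?thesis unfolding TM_def mem_Collect_eq prod.case
    by (intro exI[of _ "\<lambda>n. t n / c"] exI[of _ "\<lambda>n. c *\<^sub>R hs n"] exI[of _ "\<lambda>n. c *\<^sub>R zs n"]) auto
qed

lemma NM_add:
  assumes "u \<in> NM f xb p" "v \<in> NM f xb p" shows "u + v \<in> NM f xb p"
proof -
  obtain a b c d where uv: "u = (a, b)" "v = (c, d)" by (cases u, cases v)
  have "inner (a + c) h + inner (b + d) z \<le> 0" if "(h, z) \<in> TM f xb p" for h z
  proof -
    have "inner a h + inner b z \<le> 0" "inner c h + inner d z \<le> 0"
      using assms uv that unfolding NM_def by auto
    thus ?thesis by (simp add: inner_add_left)
  qed
  thus ?thesis using uv unfolding NM_def by auto
qed

lemma NM_scale: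
  assumes "u \<in> NM f xb p" "c \<ge> 0" shows "c *\<^sub>R u \<in> NM f xb p"
proof -
  obtain a b where uv: "u = (a, b)" by (cases u)
  have "inner (c *\<^sub>R a) h + inner (c *\<^sub>R b) z \<le> 0" if "(h, z) \<in> TM f xb p" for h z
  proof -
    have "inner a h + inner b z \<le> 0" using assms uv that unfolding NM_def by auto
    hence "c * (inner a h + inner b z) \<le> 0" using assms(2) mult_nonneg_nonpos by blast
    thus ?thesis by (simp add: distrib_left)
  qed
  thus ?thesis using uv unfolding NM_def by auto
qed

theorem theorem4p2:
  fixes f :: "'a::{real_inner, complete_space} \<Rightarrow> ereal" and xb :: 'a
  assumes "proper_fun f" and "lsc_fun f"
    and "xb \<in> edom f" and "0 \<in> prox_subdiff f xb"
    and "qri (NM f xb 0) \<noteq> {}"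
    and "qri (sv_dom (d2M f xb 0)) \<subseteq> uminus ` sqri (sv_dom (D2M f xb 0))"
    and "second_kind f xb"
  shows "third_kind f xb"
proof -
  obtain \<beta> where b0: "\<beta> > 0" and bk: "\<forall>h \<in> sv_dom (D2M f xb 0) \<inter> sphere 0 1.
      \<exists>z \<in> D2M f xb 0 h. inner z h \<ge> \<beta>"
    using assms(7) unfolding second_kind_def by blast
  let ?D = "sv_dom (D2M f xb 0)"
  let ?P = "sv_dom (d2M f xb 0)"
  have key: "inner a d \<le> - \<beta> * (norm d)^2" if d: "d \<in> ?D" and ad: "(a, d) \<in> NM f xb 0" for a d
  proof (cases "d = 0")
    case True thus ?thesis by simp
  next
    case False
    define u where "u = (1 / norm d) *\<^sub>R d"
    obtain z where z: "(d, z) \<in> TM f xb 0" using d unfolding sv_dom_def D2M_def by auto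
    have "(u, (1 / norm d) *\<^sub>R z) \<in> TM f xb 0" unfolding u_def
      by (rule TM_scale[OF z]) (use False in simp)
    hence "u \<in> ?D" unfolding sv_dom_def D2M_def by auto
    moreover have "norm u = 1" using False unfolding u_def by simp
    ultimately have "u \<in> ?D \<inter> sphere 0 1" by (simp add: dist_norm)
    from bk[rule_format, OF this] obtain z' where z': "(u, z') \<in> TM f xb 0" "inner z' u \<ge> \<beta>"
      unfolding D2M_def by auto
    have ineq: "inner a u + inner d z' \<le> 0" using ad z'(1) unfolding NM_def by auto
    have du: "d = norm d *\<^sub>R u" using False unfolding u_def by simp
    have e1: "inner a d = norm d * inner a u" by (subst du) (simp add: inner_scaleR_right)
    have e2: "inner d z' = norm d * inner u z'" by (subst du) (simp add: inner_scaleR_left)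
    have "norm d * (inner a u + inner d z') \<le> 0"
      using ineq norm_ge_zero mult_nonneg_nonpos by blast
    hence "inner a d \<le> - (norm d * inner d z')" using e1 by (simp add: distrib_left)
    also have "\<dots> = - (norm d * (norm d * inner u z'))" using e2 by simp
    also have "\<dots> \<le> - (norm d * (norm d * \<beta>))"
      using z'(2) by (simp add: inner_commute mult_left_mono)
    finally show ?thesis by (simp add: power2_eq_square mult.commute mult.left_commute)
  qed
  obtain w0 where w0: "w0 \<in> qri (NM f xb 0)" using assms(5) by blast
  obtain a0 b0 where ab: "w0 = (a0, b0)" by (cases w0)
  have Peq: "?P = (\<lambda>p. - snd p) ` NM f xb 0"
  proof
    show "?P \<subseteq> (\<lambda>p. - snd p) ` NM f xb 0"
    proof
      fix h assume "h \<in> ?P"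
      then obtain z where "(z, - h) \<in> NM f xb 0" unfolding sv_dom_def d2M_def by auto
      thus "h \<in> (\<lambda>p. - snd p) ` NM f xb 0" by (rule rev_image_eqI) simp
    qed
  next
    show "(\<lambda>p. - snd p) ` NM f xb 0 \<subseteq> ?P"
    proof
      fix h assume "h \<in> (\<lambda>p. - snd p) ` NM f xb 0"
      then obtain a b where "(a, b) \<in> NM f xb 0" "h = - b" by auto
      hence "a \<in> d2M f xb 0 h" unfolding d2M_def by simp
      thus "h \<in> ?P" unfolding sv_dom_def by auto
    qed
  qed
  have "(\<lambda>p. - snd p) w0 \<in> qri ((\<lambda>p. - snd p) ` NM f xb 0)"
    by (rule qri_image[OF _ w0]) (intro bounded_linear_minus bounded_linear_snd)
  hence h0q: "- b0 \<in> qri ?P" using Peq ab by simp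
  have w0N: "(a0, b0) \<in> NM f xb 0" using w0 ab unfolding qri_def by auto
  have Padd: "x + y \<in> ?P" if "x \<in> ?P" "y \<in> ?P" for x y
  proof -
    have "x \<in> (\<lambda>p. - snd p) ` NM f xb 0" "y \<in> (\<lambda>p. - snd p) ` NM f xb 0"
      using that Peq by auto
    then obtain u v where "u \<in> NM f xb 0" "v \<in> NM f xb 0" "x = - snd u" "y = - snd v"
      by blast
    hence "u + v \<in> NM f xb 0" "x + y = - snd (u + v)" using NM_add[of u f xb 0 v] by auto
    thus ?thesis unfolding Peq by (rule rev_image_eqI)
  qed
  have Pscl: "c *\<^sub>R x \<in> ?P" if "c \<ge> 0" "x \<in> ?P" for c x
  proof -
    have "x \<in> (\<lambda>p. - snd p) ` NM f xb 0" using that Peq by auto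
    then obtain u where "u \<in> NM f xb 0" "x = - snd u" by blast
    hence "c *\<^sub>R u \<in> NM f xb 0" "c *\<^sub>R x = - snd (c *\<^sub>R u)" using NM_scale[of u f xb 0 c] that(1) by auto
    thus ?thesis unfolding Peq by (rule rev_image_eqI)
  qed
  show ?thesis unfolding third_kind_def
  proof (intro exI[of _ \<beta>] conjI b0 ballI)
    fix h z assume h: "h \<in> sphere 0 1 \<inter> ?P" and z: "z \<in> d2M f xb 0 h"
    have zN: "(z, - h) \<in> NM f xb 0" using z unfolding d2M_def by auto
    have hP: "h \<in> ?P" using h by auto
    have nh: "norm h = 1" using h by (simp add: dist_norm)
    define g where "g = (\<lambda>l::real. inner (z + l *\<^sub>R a0) (h + l *\<^sub>R (- b0)) - \<beta> * (norm (h + l *\<^sub>R (- b0)))^2)"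
    have gpos: "g l \<ge> 0" if l: "l > 0" for l
    proof -
      have "h + l *\<^sub>R (- b0) \<in> qri ?P" by (rule qri_absorb[OF Padd Pscl h0q hP l])
      with assms(6) obtain d where d: "d \<in> sqri ?D" "h + l *\<^sub>R (- b0) = - d" by blast
      have dD: "d \<in> ?D" using d(1) unfolding sqri_def by auto
      have "(z, - h) + l *\<^sub>R (a0, b0) \<in> NM f xb 0"
        using NM_add[OF zN NM_scale[OF w0N]] l by simp
      moreover have "(z, - h) + l *\<^sub>R (a0, b0) = (z + l *\<^sub>R a0, d)"
      proof -
        have "d = - (h + l *\<^sub>R (- b0))" using d(2) by simp
        thus ?thesis by simp
      qed
      ultimately have "(z + l *\<^sub>R a0, d) \<in> NM f xb 0" by simp
      from key[OF dD this] have "inner (z + l *\<^sub>R a0) d \<le> - \<beta> * (norm d)^2" .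
      moreover have "d = - (h + l *\<^sub>R (- b0))" using d(2) by simp
      ultimately have "inner (z + l *\<^sub>R a0) (- (h + l *\<^sub>R (- b0))) \<le> - \<beta> * (norm (- (h + l *\<^sub>R (- b0))))^2"
        by simp
      hence "- inner (z + l *\<^sub>R a0) (h + l *\<^sub>R (- b0)) \<le> - \<beta> * (norm (h + l *\<^sub>R (- b0)))^2"
        by (simp only: inner_minus_right norm_minus_cancel)
      thus ?thesis unfolding g_def by linarith
    qed
    have "(g \<longlongrightarrow> g 0) (at_right 0)" unfolding g_def by (intro tendsto_intros)
    moreover have "eventually (\<lambda>l. 0 \<le> g l) (at_right 0)"
      using eventually_at_right_less[of "0::real"] gpos by (auto elim: eventually_mono)
    ultimately have "0 \<le> g 0" by (intro tendsto_lowerbound) auto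
    thus "\<beta> \<le> inner z h" unfolding g_def using nh by simp
  qed
qed

end
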